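(* Let $\phi$ be a $\gamma$-leaky, $H$-smooth activation and $C_R=10R^2\gamma^{-2}+10$. (a) Under (A1) and (A2), with probability at least $1-\delta$, $\max_{i,j}\frac{e^{-y_if(x_i;W^{(0)})}}{e^{-y_jf(x_j;W^{(0)})}}\le e^2$. (b) If at time $t$ there is a constant $C_R'>1$ with $\max_{i,j}g_i^{(t)}/g_j^{(t)}\le C_R'$, if $\|x_k\|^2\ge2\gamma^{-2}C_R'n\max_{i\ne k}|\langle x_i,x_k\rangle|$ for all $k$, and if $\alpha\le\gamma^2/(2HC_R'R^2R_{\max}^2n)$, then for all $k\in[n]$, $y_k[f(x_k;W^{(t+1)})-f(x_k;W^{(t)})]\ge\frac{\alpha\gamma^2R_{\min}^2}{4C_R'n}\hat G(W^{(t)})$. (c) If $\|x_k\|^2\ge8\gamma^{-2}n\max_{i\ne k}|\langle x_i,x_k\rangle|$ for all $k$, then under (A1) and (A2), with probability at least $1-\delta$, $y_kf(x_k;W^{(1)})>0$ for all $k\in[n]$.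
   Context: Network $f(x;W)=\sum_{j=1}^ma_j\phi(\langle w_j,x\rangle)$, $a_j\in\{\pm1/\sqrt m\}$. $\phi$ is $\gamma$-leaky, $H$-smooth if $\phi(0)=0$, $\phi$ twice differentiable, $\gamma\le\phi'\le1$, $|\phi''|\le H$. Logistic loss $\ell(z)=\log(1+e^{-z})$, $\hat L(W)=\frac1n\sum_i\ell(y_if(x_i;W))$; gradient descent from $W^{(0)}$ with i.i.d. $\mathsf N(0,\omega_{\mathrm{init}}^2)$ entries, $W^{(t+1)}=W^{(t)}-\alpha\nabla\hat L(W^{(t)})$. $g(z)=1/(1+e^z)$, $g_i^{(t)}=g(y_if(x_i;W^{(t)}))$, $\hat G(W)=\frac1n\sum_ig(y_if(x_i;W))$. $R_{\max}=\max_i\|x_i\|$, $R_{\min}=\min_i\|x_i\|$, $R=R_{\max}/R_{\min}$. (A1): $\alpha\le\gamma^2(5nR_{\max}^2R^2C_R\max(1,H))^{-1}$; (A2): $\omega_{\mathrm{init}}\le\alpha\gamma^2R_{\min}(72RC_Rn\sqrt{md\log(4m/\delta)})^{-1}$, for a given $\delta\in(0,1)$. *)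

theory Defs
  imports "HOL-Probability.Probability"
begin

text \<open>Data: n samples x i (i < n), each a vector in R^d given as x i k (k < d);
labels y i in {-1,1}. Network weights W (j,k) for neuron j < m, coordinate k < d;
second layer a j in {1/sqrt m, -1/sqrt m}.\<close>

definition ip :: "nat \<Rightarrow> (nat \<Rightarrow> real) \<Rightarrow> (nat \<Rightarrow> real) \<Rightarrow> real" where
  "ip d u v = (\<Sum>k<d. u k * v k)"

definition vnorm :: "nat \<Rightarrow> (nat \<Rightarrow> real) \<Rightarrow> real" where
  "vnorm d u = sqrt (ip d u u)"

definition leaky_smooth :: "(real \<Rightarrow> real) \<Rightarrow> real \<Rightarrow> real \<Rightarrow> bool" where
  "leaky_smooth \<phi> \<gamma> H \<longleftrightarrow> \<phi> 0 = 0
     \<and> (\<forall>z. \<phi> differentiable (at z)) \<and> (\<forall>z. deriv \<phi> differentiable (at z))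
     \<and> (\<forall>z. \<gamma> \<le> deriv \<phi> z \<and> deriv \<phi> z \<le> 1)
     \<and> (\<forall>z. \<bar>deriv (deriv \<phi>) z\<bar> \<le> H)"

definition net :: "(real \<Rightarrow> real) \<Rightarrow> (nat \<Rightarrow> real) \<Rightarrow> nat \<Rightarrow> nat
    \<Rightarrow> (nat \<times> nat \<Rightarrow> real) \<Rightarrow> (nat \<Rightarrow> real) \<Rightarrow> real" where
  "net \<phi> a m d W z = (\<Sum>j<m. a j * \<phi> (\<Sum>k<d. W (j,k) * z k))"

definition logistic :: "real \<Rightarrow> real" where
  "logistic z = ln (1 + exp (- z))"

definition gfun :: "real \<Rightarrow> real" where
  "gfun z = 1 / (1 + exp z)"

definition emp_loss :: "(real \<Rightarrow> real) \<Rightarrow> (nat \<Rightarrow> real) \<Rightarrow> nat \<Rightarrow> nat \<Rightarrow> nat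
    \<Rightarrow> (nat \<Rightarrow> nat \<Rightarrow> real) \<Rightarrow> (nat \<Rightarrow> real) \<Rightarrow> (nat \<times> nat \<Rightarrow> real) \<Rightarrow> real" where
  "emp_loss \<phi> a m d n x y W = (1 / real n) * (\<Sum>i<n. logistic (y i * net \<phi> a m d W (x i)))"

definition emp_G :: "(real \<Rightarrow> real) \<Rightarrow> (nat \<Rightarrow> real) \<Rightarrow> nat \<Rightarrow> nat \<Rightarrow> nat
    \<Rightarrow> (nat \<Rightarrow> nat \<Rightarrow> real) \<Rightarrow> (nat \<Rightarrow> real) \<Rightarrow> (nat \<times> nat \<Rightarrow> real) \<Rightarrow> real" where
  "emp_G \<phi> a m d n x y W = (1 / real n) * (\<Sum>i<n. gfun (y i * net \<phi> a m d W (x i)))"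

definition grad :: "((nat \<times> nat \<Rightarrow> real) \<Rightarrow> real) \<Rightarrow> (nat \<times> nat \<Rightarrow> real) \<Rightarrow> (nat \<times> nat \<Rightarrow> real)" where
  "grad L W = (\<lambda>p. deriv (\<lambda>t. L (W(p := t))) (W p))"

primrec gd :: "((nat \<times> nat \<Rightarrow> real) \<Rightarrow> real) \<Rightarrow> real \<Rightarrow> (nat \<times> nat \<Rightarrow> real) \<Rightarrow> nat
    \<Rightarrow> (nat \<times> nat \<Rightarrow> real)" where
  "gd L \<alpha> W0 0 = W0"
| "gd L \<alpha> W0 (Suc t) = (\<lambda>p. gd L \<alpha> W0 t p - \<alpha> * grad L (gd L \<alpha> W0 t) p)"

definition init_measure :: "nat \<Rightarrow> nat \<Rightarrow> real \<Rightarrow> (nat \<times> nat \<Rightarrow> real) measure" where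
  "init_measure m d \<omega> = PiM ({..<m} \<times> {..<d}) (\<lambda>_. density lborel (normal_density 0 \<omega>))"

definition Rmax :: "nat \<Rightarrow> nat \<Rightarrow> (nat \<Rightarrow> nat \<Rightarrow> real) \<Rightarrow> real" where
  "Rmax n d x = Max ((\<lambda>i. vnorm d (x i)) ` {..<n})"

definition Rmin :: "nat \<Rightarrow> nat \<Rightarrow> (nat \<Rightarrow> nat \<Rightarrow> real) \<Rightarrow> real" where
  "Rmin n d x = Min ((\<lambda>i. vnorm d (x i)) ` {..<n})"

end

theory Submission
  imports Defs
begin

lemma ls_facts:
  assumes "leaky_smooth \<phi> \<gamma> H"
  shows "\<phi> 0 = 0" "\<And>z. (\<phi> has_real_derivative deriv \<phi> z) (at z)"
    "\<And>z. (deriv \<phi> has_real_derivative deriv (deriv \<phi>) z) (at z)"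
    "\<And>z. \<gamma> \<le> deriv \<phi> z" "\<And>z. deriv \<phi> z \<le> 1" "\<And>z. \<bar>deriv (deriv \<phi>) z\<bar> \<le> H"
    "0 \<le> H" "\<gamma> \<le> 1"
  using assms unfolding leaky_smooth_def
  by (auto simp: DERIV_deriv_iff_real_differentiable intro: order.trans[OF abs_ge_zero] order.trans)

lemma phi_taylor:
  assumes "leaky_smooth \<phi> \<gamma> H"
  shows "\<bar>\<phi> (u + e) - \<phi> u - deriv \<phi> u * e\<bar> \<le> H * e\<^sup>2 / 2"
proof (cases "e = 0")
  case True thus ?thesis by simp
next
  case False
  note F = ls_facts[OF assms]
  define diff :: "nat \<Rightarrow> real \<Rightarrow> real" where
    "diff = (\<lambda>k. if k = 0 then \<phi> else if k = 1 then deriv \<phi> else deriv (deriv \<phi>))"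
  have "\<exists>t. (if u + e < u then u + e < t \<and> t < u else u < t \<and> t < u + e) \<and>
    \<phi> (u + e) = (\<Sum>m<2. (diff m u / fact m) * (u + e - u)^m) + (diff 2 t / fact 2) * (u + e - u)^2"
    apply (rule Taylor[where a="u - \<bar>e\<bar>" and b = "u + \<bar>e\<bar>"])
    using False F(2,3) by (auto simp: diff_def less_Suc_eq)
  then obtain t where t: "\<phi> (u + e) = \<phi> u + deriv \<phi> u * e + deriv (deriv \<phi>) t / 2 * e^2"
    by (auto simp: diff_def numeral_2_eq_2 eval_nat_numeral)
  have "\<bar>deriv (deriv \<phi>) t / 2 * e^2\<bar> \<le> H * e\<^sup>2 / 2"
    using F(6)[of t] by (simp add: abs_mult mult_right_mono)
  thus ?thesis using t by simp
qed

lemma phi_abs: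
  assumes "leaky_smooth \<phi> \<gamma> H" "0 \<le> \<gamma>"
  shows "\<bar>\<phi> z\<bar> \<le> \<bar>z\<bar>"
proof (cases "z = 0")
  case True thus ?thesis using ls_facts[OF assms(1)] by simp
next
  case False
  note F = ls_facts[OF assms(1)]
  define diff :: "nat \<Rightarrow> real \<Rightarrow> real" where "diff = (\<lambda>k. if k = 0 then \<phi> else deriv \<phi>)"
  have "\<exists>t. (if z < 0 then z < t \<and> t < 0 else 0 < t \<and> t < z) \<and>
    \<phi> z = (\<Sum>m<1. (diff m 0 / fact m) * (z - 0)^m)
       + (diff 1 t / fact 1) * (z - 0)^1"
    apply (rule Taylor[where a="- \<bar>z\<bar>" and b = "\<bar>z\<bar>" and n=1 and f=\<phi> and c=0 and x=z])
    using False F(2) by (auto simp: diff_def)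
  then obtain t where "\<phi> z = deriv \<phi> t * z" using F(1) by (auto simp: diff_def)
  moreover have "\<bar>deriv \<phi> t\<bar> \<le> 1" using F(4,5)[of t] assms(2) by auto
  ultimately show ?thesis by (simp add: abs_mult mult_left_le_one_le)
qed

definition pre :: "nat \<Rightarrow> (nat \<times> nat \<Rightarrow> real) \<Rightarrow> (nat \<Rightarrow> real) \<Rightarrow> nat \<Rightarrow> real" where
  "pre d W z j = (\<Sum>k<d. W (j,k) * z k)"

lemma pre_upd: "pre d (W(p:=t)) z j = pre d W z j + (if j = fst p \<and> snd p < d then (t - W p) * z (snd p) else 0)"
proof -
  have "pre d (W(p:=t)) z j = (\<Sum>k<d. W (j,k) * z k + (if k = snd p \<and> j = fst p then (t - W p) * z (snd p) else 0))"
    unfolding pre_def by (intro sum.cong) (auto simp: algebra_simps)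
  also have "\<dots> = pre d W z j + (\<Sum>k<d. (if k = snd p \<and> j = fst p then (t - W p) * z (snd p) else 0))"
    by (simp add: sum.distrib pre_def)
  also have "(\<Sum>k<d. (if k = snd p \<and> j = fst p then (t - W p) * z (snd p) else 0)) = (if j = fst p \<and> snd p < d then (t - W p) * z (snd p) else 0)"
    by (cases "j = fst p") (auto simp: sum.delta)
  finally show ?thesis .
qed

lemma net_pre: "net \<phi> a m d W z = (\<Sum>j<m. a j * \<phi> (pre d W z j))"
  by (simp add: net_def pre_def)

lemma net_upd_deriv:
  assumes "leaky_smooth \<phi> \<gamma> H"
  shows "((\<lambda>t. net \<phi> a m d (W(p:=t)) z) has_real_derivative
     (\<Sum>j<m. a j * (deriv \<phi> (pre d W z j) * (if j = fst p \<and> snd p < d then z (snd p) else 0)))) (at (W p))"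
proof -
  note F = ls_facts[OF assms]
  have e: "(\<lambda>t. net \<phi> a m d (W(p:=t)) z) = (\<lambda>t. \<Sum>j<m. a j * \<phi> (pre d W z j + (if j = fst p \<and> snd p < d then (t - W p) * z (snd p) else 0)))"
    by (simp add: net_pre pre_upd)
  have "\<And>j. ((\<lambda>t. \<phi> (pre d W z j + (if j = fst p \<and> snd p < d then (t - W p) * z (snd p) else 0))) has_real_derivative
     deriv \<phi> (pre d W z j) * (if j = fst p \<and> snd p < d then z (snd p) else 0)) (at (W p))"
  proof -
    fix j
    have i: "((\<lambda>t. pre d W z j + (if j = fst p \<and> snd p < d then (t - W p) * z (snd p) else 0)) has_real_derivative
       (if j = fst p \<and> snd p < d then z (snd p) else 0)) (at (W p))"
      by (cases "j = fst p \<and> snd p < d") (auto intro!: derivative_eq_intros)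
    have c: "pre d W z j + (if j = fst p \<and> snd p < d then (W p - W p) * z (snd p) else 0) = pre d W z j" by simp
    show "?thesis j"
      using DERIV_chain2[OF F(2) i] unfolding c by (simp add: o_def)
  qed
  then show ?thesis unfolding e
    by (auto intro!: DERIV_sum DERIV_cmult)
qed

lemma logistic_deriv: "(logistic has_real_derivative - gfun z) (at z)"
proof -
  have "(logistic has_real_derivative (1 / (1 + exp (- z))) * (exp (-z) * -1)) (at z)"
    unfolding logistic_def[abs_def]
    by (auto intro!: derivative_eq_intros simp: add_pos_pos)
  moreover have "(1 / (1 + exp (- z))) * (exp (-z) * -1) = - gfun z"
    unfolding gfun_def by (simp add: field_simps exp_minus)
  ultimately show ?thesis by simp
qed

definition gradf where
  "gradf \<phi> a m d n x y W = (\<lambda>(j0,k0). if j0 < m \<and> k0 < d then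
     - (1 / real n) * (\<Sum>i<n. gfun (y i * net \<phi> a m d W (x i)) * y i * a j0 * deriv \<phi> (pre d W (x i) j0) * x i k0) else 0)"

lemma grad_formula:
  assumes "leaky_smooth \<phi> \<gamma> H"
  shows "grad (emp_loss \<phi> a m d n x y) W = gradf \<phi> a m d n x y W"
proof
  fix p :: "nat \<times> nat"
  obtain j0 k0 where p: "p = (j0, k0)" by force
  define D where "D i = (\<Sum>j<m. a j * (deriv \<phi> (pre d W (x i) j) * (if j = fst p \<and> snd p < d then x i (snd p) else 0)))" for i
  have "((\<lambda>t. emp_loss \<phi> a m d n x y (W(p:=t))) has_real_derivative
     (1 / real n) * (\<Sum>i<n. (- gfun (y i * net \<phi> a m d (W(p := W p)) (x i))) * (y i * D i))) (at (W p))"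
    unfolding emp_loss_def D_def
    by (intro DERIV_cmult DERIV_sum DERIV_chain2[OF logistic_deriv] net_upd_deriv[OF assms]) 
  then have "grad (emp_loss \<phi> a m d n x y) W p = (1 / real n) * (\<Sum>i<n. (- gfun (y i * net \<phi> a m d W (x i))) * (y i * D i))"
    unfolding grad_def by (simp add: DERIV_imp_deriv)
  also have "\<dots> = gradf \<phi> a m d n x y W p"
  proof (cases "j0 < m \<and> k0 < d")
    case True
    have "D i = a j0 * deriv \<phi> (pre d W (x i) j0) * x i k0" for i
      unfolding D_def p using True by (simp add: if_distrib sum.delta cong: if_cong)
    then show ?thesis using True unfolding gradf_def p
      by (simp add: sum_negf sum_distrib_left algebra_simps)
  next
    case False
    have "D i = 0" for i
      unfolding D_def p using False by (auto intro!: sum.neutral)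
    then show ?thesis using False unfolding gradf_def p by auto
  qed
  finally show "grad (emp_loss \<phi> a m d n x y) W p = gradf \<phi> a m d n x y W p" .
qed

lemma ip_cs: "\<bar>ip d u v\<bar> \<le> vnorm d u * vnorm d v"
proof -
  have "(ip d u v)\<^sup>2 \<le> ip d u u * ip d v v"
    unfolding ip_def using Cauchy_Schwarz_ineq_sum[of u v "{..<d}"] by (simp add: power2_eq_square)
  then have "sqrt ((ip d u v)\<^sup>2) \<le> sqrt (ip d u u * ip d v v)" by (rule real_sqrt_le_mono)
  then show ?thesis unfolding vnorm_def by (simp add: real_sqrt_mult)
qed

lemma ip_self: "ip d u u = (vnorm d u)\<^sup>2" "0 \<le> vnorm d u"
  unfolding vnorm_def ip_def by (auto simp: sum_nonneg power2_eq_square[symmetric])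

lemma pre_step:
  assumes "j < m"
  shows "pre d (\<lambda>p. W p - \<alpha> * gradf \<phi> a m d n x y W p) z j
    = pre d W z j + \<alpha> / real n * a j * (\<Sum>i<n. gfun (y i * net \<phi> a m d W (x i)) * y i * deriv \<phi> (pre d W (x i) j) * ip d (x i) z)"
proof -
  define c where "c i = gfun (y i * net \<phi> a m d W (x i)) * y i * a j * deriv \<phi> (pre d W (x i) j)" for i
  have "pre d (\<lambda>p. W p - \<alpha> * gradf \<phi> a m d n x y W p) z j
     = (\<Sum>k<d. W (j,k) * z k + \<alpha> / real n * (\<Sum>i<n. c i * x i k * z k))"
  proof -
    have "W (j,k) - \<alpha> * gradf \<phi> a m d n x y W (j,k) = W (j,k) + \<alpha> / real n * (\<Sum>i<n. c i * x i k)" if "k < d" for k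
      unfolding gradf_def c_def using assms that by (simp add: sum_negf mult.assoc)
    note e = this
    have "(W (j,k) - \<alpha> * gradf \<phi> a m d n x y W (j,k)) * z k = W (j,k) * z k + \<alpha> / real n * (\<Sum>i<n. c i * x i k * z k)" if "k < d" for k
    proof -
      have "(W (j,k) - \<alpha> * gradf \<phi> a m d n x y W (j,k)) * z k = (W (j,k) + \<alpha> / real n * (\<Sum>i<n. c i * x i k)) * z k"
        by (simp only: e[OF that])
      also have "\<dots> = W (j,k) * z k + \<alpha> / real n * (\<Sum>i<n. c i * x i k * z k)"
        by (simp add: distrib_right sum_distrib_right mult.assoc)
      finally show ?thesis .
    qed
    then show ?thesis unfolding pre_def
      by (intro sum.cong refl) simp
  qed
  also have "\<dots> = pre d W z j + \<alpha> / real n * (\<Sum>i<n. c i * ip d (x i) z)"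
  proof -
    have "(\<Sum>k<d. \<alpha> / real n * (\<Sum>i<n. c i * x i k * z k)) = \<alpha> / real n * (\<Sum>k<d. \<Sum>i<n. c i * x i k * z k)"
      by (simp add: sum_distrib_left)
    also have "(\<Sum>k<d. \<Sum>i<n. c i * x i k * z k) = (\<Sum>i<n. \<Sum>k<d. c i * x i k * z k)"
      by (rule sum.swap)
    also have "\<dots> = (\<Sum>i<n. c i * ip d (x i) z)"
      unfolding ip_def by (simp add: sum_distrib_left mult.assoc)
    finally show ?thesis unfolding pre_def by (simp add: sum.distrib)
  qed
  also have "\<dots> = pre d W z j + \<alpha> / real n * a j * (\<Sum>i<n. gfun (y i * net \<phi> a m d W (x i)) * y i * deriv \<phi> (pre d W (x i) j) * ip d (x i) z)"
    unfolding c_def by (simp add: sum_distrib_left algebra_simps)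
  finally show ?thesis .
qed

lemma gfun_bounds: "0 < gfun z" "gfun z < 1"
  unfolding gfun_def by (auto simp: add_pos_pos)

lemma R_facts:
  assumes n: "1 \<le> n" and xnz: "\<forall>i<n. vnorm d (x i) \<noteq> 0"
  shows "0 < Rmin n d x" "\<And>i. i < n \<Longrightarrow> Rmin n d x \<le> vnorm d (x i)"
    "\<And>i. i < n \<Longrightarrow> vnorm d (x i) \<le> Rmax n d x" "Rmin n d x \<le> Rmax n d x"
proof -
  have ne: "(\<lambda>i. vnorm d (x i)) ` {..<n} \<noteq> {}" using n by (auto simp: lessThan_empty_iff)
  have fin: "finite ((\<lambda>i. vnorm d (x i)) ` {..<n})" by simp
  have pos: "\<forall>v\<in>(\<lambda>i. vnorm d (x i)) ` {..<n}. 0 < v" using xnz ip_self(2) by (auto simp: order_le_less)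
  show "0 < Rmin n d x" unfolding Rmin_def using Min_in[OF fin ne] pos by blast
  show a: "\<And>i. i < n \<Longrightarrow> Rmin n d x \<le> vnorm d (x i)" unfolding Rmin_def by (rule Min_le[OF fin]) auto
  show b: "\<And>i. i < n \<Longrightarrow> vnorm d (x i) \<le> Rmax n d x" unfolding Rmax_def by (rule Max_ge[OF fin]) auto
  show "Rmin n d x \<le> Rmax n d x" using a[of 0] b[of 0] n by linarith
qed

lemma one_step:
  fixes \<phi> :: "real \<Rightarrow> real" and \<gamma> H :: real
    and n m d :: nat and x :: "nat \<Rightarrow> nat \<Rightarrow> real" and y :: "nat \<Rightarrow> real"
    and a :: "nat \<Rightarrow> real" and \<alpha> C :: real and W :: "nat \<times> nat \<Rightarrow> real" and k :: nat
  assumes phi: "leaky_smooth \<phi> \<gamma> H" and gam: "0 < \<gamma>"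
    and n: "1 \<le> n" and m: "1 \<le> m"
    and y: "\<forall>i<n. y i = 1 \<or> y i = -1"
    and a: "\<forall>j<m. a j = 1 / sqrt (real m) \<or> a j = - 1 / sqrt (real m)"
    and xnz: "\<forall>i<n. vnorm d (x i) \<noteq> 0"
    and alpha: "0 < \<alpha>" and C: "0 < C"
    and ratio: "\<forall>i<n. \<forall>j<n. gfun (y i * net \<phi> a m d W (x i)) / gfun (y j * net \<phi> a m d W (x j)) \<le> C"
    and orth: "\<forall>k<n. \<forall>i<n. i \<noteq> k \<longrightarrow> (vnorm d (x k))\<^sup>2 \<ge> 2 / \<gamma>\<^sup>2 * C * real n * \<bar>ip d (x i) (x k)\<bar>"
    and st: "\<alpha> * (2 * H * C * (Rmax n d x / Rmin n d x)\<^sup>2 * (Rmax n d x)\<^sup>2 * real n) \<le> \<gamma>\<^sup>2"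
    and k: "k < n"
  shows "y k * (net \<phi> a m d (\<lambda>p. W p - \<alpha> * gradf \<phi> a m d n x y W p) (x k) - net \<phi> a m d W (x k))
     \<ge> \<alpha> * \<gamma>\<^sup>2 * (Rmin n d x)\<^sup>2 / (4 * C * real n) * emp_G \<phi> a m d n x y W"
proof -
  note F = ls_facts[OF phi]
  note RF = R_facts[OF n xnz]
  define Rx where "Rx = Rmax n d x"
  define Rn where "Rn = Rmin n d x"
  define g where "g i = gfun (y i * net \<phi> a m d W (x i))" for i
  define ph where "ph j i = deriv \<phi> (pre d W (x i) j)" for j i
  define s where "s j = pre d W (x k) j" for j
  define ipk where "ipk i = ip d (x i) (x k)" for i
  define \<delta> where "\<delta> j = \<alpha> / real n * a j * (\<Sum>i<n. g i * y i * ph j i * ipk i)" for j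
  define Gh where "Gh = (1 / real n) * (\<Sum>i<n. g i)"
  define vk where "vk = vnorm d (x k)"
  define N where "N = vk\<^sup>2"
  have Gh_eq: "emp_G \<phi> a m d n x y W = Gh" unfolding emp_G_def Gh_def g_def ..
  have g01: "0 < g i" "g i < 1" for i unfolding g_def using gfun_bounds by auto
  have nr: "0 < real n" using n by simp
  have mr: "1 \<le> real m" using m by simp
  have sm: "1 \<le> sqrt (real m)" using mr by simp
  have Rn: "0 < Rn" "Rn \<le> Rx" using RF unfolding Rn_def Rx_def by auto
  have vk: "Rn \<le> vk" "vk \<le> Rx" using RF k unfolding Rn_def Rx_def vk_def by auto
  have yk: "y k * y k = 1" using y k by auto
  have ya: "\<bar>y i\<bar> = 1" if "i < n" for i using y that by auto
  have aa: "a j * a j = 1 / real m" if "j < m" for j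
  proof -
    have "a j * a j = (1 / sqrt (real m)) * (1 / sqrt (real m))" using a that by auto
    also have "\<dots> = 1 / real m" using mr by simp
    finally show ?thesis .
  qed
  have absa: "\<bar>a j\<bar> = 1 / sqrt (real m)" if "j < m" for j using a that by auto
  have ph: "\<gamma> \<le> ph j i" "ph j i \<le> 1" for j i unfolding ph_def using F by auto
  have ipk_le: "\<bar>ipk i\<bar> \<le> Rx * vk" if "i < n" for i
  proof -
    have "\<bar>ipk i\<bar> \<le> vnorm d (x i) * vk" unfolding ipk_def vk_def by (rule ip_cs)
    also have "\<dots> \<le> Rx * vk" using RF(3)[OF that] vk Rn unfolding Rx_def by (intro mult_right_mono) auto
    finally show ?thesis .
  qed
  have ipkk: "ipk k = N" unfolding ipk_def N_def vk_def by (rule ip_self(1))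
  have inc: "net \<phi> a m d (\<lambda>p. W p - \<alpha> * gradf \<phi> a m d n x y W p) (x k) - net \<phi> a m d W (x k)
      = (\<Sum>j<m. a j * (\<phi> (s j + \<delta> j) - \<phi> (s j)))"
  proof -
    have "net \<phi> a m d (\<lambda>p. W p - \<alpha> * gradf \<phi> a m d n x y W p) (x k) = (\<Sum>j<m. a j * \<phi> (s j + \<delta> j))"
      unfolding net_pre[of \<phi> a m d "(\<lambda>p. W p - \<alpha> * gradf \<phi> a m d n x y W p)"]
      by (intro sum.cong refl) (simp add: pre_step s_def \<delta>_def g_def ph_def ipk_def mult.assoc)
    moreover have "net \<phi> a m d W (x k) = (\<Sum>j<m. a j * \<phi> (s j))"
      unfolding net_pre[of \<phi> a m d W] s_def ..
    ultimately show ?thesis by (simp add: sum_subtractf right_diff_distrib)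
  qed
  have term_lb: "y k * (a j * (\<phi> (s j + \<delta> j) - \<phi> (s j))) \<ge> y k * a j * ph j k * \<delta> j - (1 / sqrt (real m)) * (H * (\<delta> j)\<^sup>2 / 2)"
    if "j < m" for j
  proof -
    define r where "r = \<phi> (s j + \<delta> j) - \<phi> (s j) - ph j k * \<delta> j"
    have r: "\<bar>r\<bar> \<le> H * (\<delta> j)\<^sup>2 / 2" unfolding r_def ph_def s_def by (rule phi_taylor[OF phi])
    have "\<bar>y k * a j * r\<bar> = (1 / sqrt (real m)) * \<bar>r\<bar>" using ya[OF k] absa[OF that] by (simp add: abs_mult)
    also have "\<dots> \<le> (1 / sqrt (real m)) * (H * (\<delta> j)\<^sup>2 / 2)" using r by (intro mult_left_mono) auto
    finally have "y k * a j * r \<ge> - ((1 / sqrt (real m)) * (H * (\<delta> j)\<^sup>2 / 2))" by linarith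
    moreover have "y k * (a j * (\<phi> (s j + \<delta> j) - \<phi> (s j))) = y k * a j * ph j k * \<delta> j + y k * a j * r"
      unfolding r_def by (simp add: algebra_simps)
    ultimately show ?thesis by linarith
  qed
  define P where "P i = (\<Sum>j<m. ph j i * ph j k)" for i
  have sum1: "(\<Sum>j<m. y k * a j * ph j k * \<delta> j) = \<alpha> / (real n * real m) * (\<Sum>i<n. g i * y i * y k * ipk i * P i)"
  proof -
    have "y k * a j * ph j k * \<delta> j = \<alpha> / (real n * real m) * (\<Sum>i<n. g i * y i * y k * ipk i * (ph j i * ph j k))"
      if "j < m" for j
    proof -
      have "y k * a j * ph j k * \<delta> j = \<alpha> / real n * (a j * a j) * (\<Sum>i<n. g i * y i * y k * ipk i * (ph j i * ph j k))"
        unfolding \<delta>_def by (simp add: sum_distrib_left algebra_simps)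
      then show ?thesis using aa[OF that] by simp
    qed
    then have "(\<Sum>j<m. y k * a j * ph j k * \<delta> j) = (\<Sum>j<m. \<alpha> / (real n * real m) * (\<Sum>i<n. g i * y i * y k * ipk i * (ph j i * ph j k)))"
      by (intro sum.cong refl) simp
    also have "\<dots> = \<alpha> / (real n * real m) * (\<Sum>j<m. \<Sum>i<n. g i * y i * y k * ipk i * (ph j i * ph j k))"
      by (simp add: sum_distrib_left)
    also have "(\<Sum>j<m. \<Sum>i<n. g i * y i * y k * ipk i * (ph j i * ph j k)) = (\<Sum>i<n. \<Sum>j<m. g i * y i * y k * ipk i * (ph j i * ph j k))"
      by (rule sum.swap)
    also have "\<dots> = (\<Sum>i<n. g i * y i * y k * ipk i * P i)"
      unfolding P_def by (simp add: sum_distrib_left)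
    finally show ?thesis .
  qed
  have P_le: "0 \<le> P i" "P i \<le> real m" for i
  proof -
    have "0 \<le> ph j i * ph j k" "ph j i * ph j k \<le> 1" for j using ph[of j i] ph[of j k] gam
      by (auto intro: mult_le_one)
    then show "0 \<le> P i" "P i \<le> real m" unfolding P_def using sum_bounded_above[of "{..<m}" "\<lambda>j. ph j i * ph j k" 1]
      by (auto intro: sum_nonneg)
  qed
  have Pk: "real m * \<gamma>\<^sup>2 \<le> P k"
  proof -
    have "\<gamma>\<^sup>2 \<le> ph j k * ph j k" for j using ph[of j k] gam by (simp add: power2_eq_square mult_mono)
    then show ?thesis unfolding P_def using sum_bounded_below[of "{..<m}" "\<gamma>\<^sup>2" "\<lambda>j. ph j k * ph j k"] by auto
  qed
  have gi_le: "g i \<le> C * g k" if "i < n" for i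
  proof -
    have "g i / g k \<le> C" using ratio that k unfolding g_def by auto
    then show ?thesis using g01[of k] by (simp add: divide_le_eq)
  qed
  have ipk_small: "C * \<bar>ipk i\<bar> \<le> \<gamma>\<^sup>2 * N / (2 * real n)" if "i < n" "i \<noteq> k" for i
  proof -
    have "2 / \<gamma>\<^sup>2 * C * real n * \<bar>ipk i\<bar> \<le> N" using orth k that unfolding N_def vk_def ipk_def by auto
    then have "(2 * real n / \<gamma>\<^sup>2) * (C * \<bar>ipk i\<bar>) \<le> N" by (simp add: algebra_simps)
    then show ?thesis using gam nr by (simp add: field_simps)
  qed
  have Toff: "g i * y i * y k * ipk i * P i \<ge> - (real m * g k * \<gamma>\<^sup>2 * N / (2 * real n))" if "i < n" "i \<noteq> k" for i
  proof -
    have "\<bar>g i * y i * y k * ipk i * P i\<bar> = g i * \<bar>ipk i\<bar> * P i"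
      using ya[OF that(1)] ya[OF k] g01[of i] P_le[of i] by (simp add: abs_mult)
    also have "\<dots> \<le> (C * g k) * \<bar>ipk i\<bar> * real m"
      using gi_le[OF that(1)] g01[of i] P_le[of i] by (intro mult_mono) auto
    also have "\<dots> = g k * real m * (C * \<bar>ipk i\<bar>)" by simp
    also have "\<dots> \<le> g k * real m * (\<gamma>\<^sup>2 * N / (2 * real n))"
      using ipk_small[OF that] g01[of k] by (intro mult_left_mono) auto
    finally show ?thesis by (simp add: abs_le_iff mult_ac)
  qed
  have inner_lb: "(\<Sum>i<n. g i * y i * y k * ipk i * P i) \<ge> real m * g k * \<gamma>\<^sup>2 * N / 2"
  proof -
    have "(\<Sum>i<n. g i * y i * y k * ipk i * P i) = g i * y i * y k * ipk i * P i + (\<Sum>i\<in>{..<n} - {k}. g i * y i * y k * ipk i * P i)"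
      if "i = k" for i using k that by (simp add: sum.remove)
    then have split: "(\<Sum>i<n. g i * y i * y k * ipk i * P i) = g k * N * P k + (\<Sum>i\<in>{..<n} - {k}. g i * y i * y k * ipk i * P i)"
      using yk ipkk by (simp add: mult_ac)
    define Q where "Q = real m * g k * \<gamma>\<^sup>2 * N / (2 * real n)"
    define S where "S = (\<Sum>i\<in>{..<n} - {k}. g i * y i * y k * ipk i * P i)"
    have f1: "g k * N * (real m * \<gamma>\<^sup>2) \<le> g k * N * P k" using Pk g01[of k] unfolding N_def by (intro mult_left_mono) auto
    have "S \<ge> (\<Sum>i\<in>{..<n} - {k}. - Q)"
      unfolding S_def Q_def using Toff by (intro sum_mono) auto
    moreover have "(\<Sum>i\<in>{..<n} - {k}. - Q) = - (real (n - 1) * Q)"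
    proof -
      have "card ({..<n} - {k}) = n - 1" using k by simp
      then show ?thesis by simp
    qed
    ultimately have f2: "S \<ge> - (real (n - 1) * Q)" by linarith
    have f3: "real (n - 1) * Q \<le> real n * Q"
      using g01[of k] unfolding Q_def N_def by (intro mult_right_mono) auto
    have f4: "real n * Q = real m * g k * \<gamma>\<^sup>2 * N / 2" unfolding Q_def using nr by simp
    have f5: "g k * N * (real m * \<gamma>\<^sup>2) = real m * g k * \<gamma>\<^sup>2 * N" by simp
    show ?thesis using split f1 f2 f3 f4 f5 unfolding S_def[symmetric] by linarith
  qed
  have first_lb: "(\<Sum>j<m. y k * a j * ph j k * \<delta> j) \<ge> \<alpha> * g k * \<gamma>\<^sup>2 * N / (2 * real n)"
  proof -
    have "\<alpha> / (real n * real m) * (real m * g k * \<gamma>\<^sup>2 * N / 2) \<le> \<alpha> / (real n * real m) * (\<Sum>i<n. g i * y i * y k * ipk i * P i)"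
      using inner_lb alpha nr mr by (intro mult_left_mono) auto
    moreover have "\<alpha> / (real n * real m) * (real m * g k * \<gamma>\<^sup>2 * N / 2) = \<alpha> * g k * \<gamma>\<^sup>2 * N / (2 * real n)"
      using mr by (simp add: field_simps)
    ultimately show ?thesis unfolding sum1 by linarith
  qed
  have Gh_nn: "0 \<le> Gh"
  proof -
    have "0 \<le> (\<Sum>i<n. g i)" using g01 by (intro sum_nonneg) (auto intro: less_imp_le)
    then show ?thesis unfolding Gh_def using nr by simp
  qed
  have Gh_le1: "Gh \<le> 1"
  proof -
    have "(\<Sum>i<n. g i) \<le> (\<Sum>i<n. 1)" using g01 by (intro sum_mono) (auto intro: less_imp_le)
    then show ?thesis unfolding Gh_def using nr by simp
  qed
  have Gh_le: "Gh \<le> C * g k"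
  proof -
    have "(\<Sum>i<n. g i) \<le> (\<Sum>i<n. C * g k)" using gi_le by (intro sum_mono) auto
    then show ?thesis unfolding Gh_def using nr by (simp add: field_simps)
  qed
  have \<delta>_abs: "\<bar>\<delta> j\<bar> \<le> \<alpha> / sqrt (real m) * (Gh * (Rx * vk))" if "j < m" for j
  proof -
    have "\<bar>\<Sum>i<n. g i * y i * ph j i * ipk i\<bar> \<le> (\<Sum>i<n. \<bar>g i * y i * ph j i * ipk i\<bar>)" by (rule sum_abs)
    also have "\<dots> \<le> (\<Sum>i<n. g i * (Rx * vk))"
    proof (intro sum_mono)
      fix i assume i: "i \<in> {..<n}"
      have "\<bar>ph j i\<bar> \<le> 1" using ph[of j i] gam by auto
      then have "\<bar>ph j i\<bar> * \<bar>ipk i\<bar> \<le> 1 * (Rx * vk)" using ipk_le[of i] i by (intro mult_mono) auto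
      then have "g i * (\<bar>ph j i\<bar> * \<bar>ipk i\<bar>) \<le> g i * (Rx * vk)" using g01[of i] by (intro mult_left_mono) auto
      then show "\<bar>g i * y i * ph j i * ipk i\<bar> \<le> g i * (Rx * vk)"
        using ya[of i] i g01[of i] by (simp add: abs_mult mult.assoc)
    qed
    also have "\<dots> = real n * (Gh * (Rx * vk))" unfolding Gh_def using nr by (simp add: sum_distrib_right)
    finally have bs: "\<bar>\<Sum>i<n. g i * y i * ph j i * ipk i\<bar> \<le> real n * (Gh * (Rx * vk))" .
    have "\<bar>\<delta> j\<bar> = \<alpha> / real n * (1 / sqrt (real m)) * \<bar>\<Sum>i<n. g i * y i * ph j i * ipk i\<bar>"
      unfolding \<delta>_def using absa[OF that] alpha nr by (simp add: abs_mult)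
    also have "\<dots> \<le> \<alpha> / real n * (1 / sqrt (real m)) * (real n * (Gh * (Rx * vk)))"
      using bs alpha nr by (intro mult_left_mono) auto
    also have "\<dots> = \<alpha> / sqrt (real m) * (Gh * (Rx * vk))" using nr by simp
    finally show ?thesis .
  qed
  define E where "E = \<alpha> / sqrt (real m) * (Gh * (Rx * vk))"
  have E_nn: "0 \<le> E" unfolding E_def using alpha Gh_nn Rn vk by auto
  have \<delta>sq: "(\<delta> j)\<^sup>2 \<le> E\<^sup>2" if "j < m" for j
    using \<delta>_abs[OF that] E_nn unfolding E_def[symmetric] by (metis abs_le_square_iff abs_of_nonneg)
  have E2: "E\<^sup>2 = \<alpha>\<^sup>2 / real m * Gh\<^sup>2 * Rx\<^sup>2 * N"
    unfolding E_def N_def using mr by (simp add: power_mult_distrib power_divide)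
  have second: "(\<Sum>j<m. (1 / sqrt (real m)) * (H * (\<delta> j)\<^sup>2 / 2)) \<le> H * \<alpha>\<^sup>2 * Gh\<^sup>2 * Rx\<^sup>2 * N / 2"
  proof -
    have "(\<Sum>j<m. (1 / sqrt (real m)) * (H * (\<delta> j)\<^sup>2 / 2)) \<le> (\<Sum>j<m. (1 / sqrt (real m)) * (H * E\<^sup>2 / 2))"
      using \<delta>sq F(7) by (intro sum_mono mult_left_mono divide_right_mono) auto
    also have "\<dots> = real m / sqrt (real m) * (H * E\<^sup>2 / 2)" by simp
    also have "\<dots> = 1 / sqrt (real m) * (H * \<alpha>\<^sup>2 * Gh\<^sup>2 * Rx\<^sup>2 * N / 2)" unfolding E2 using mr by simp
    also have "\<dots> \<le> 1 * (H * \<alpha>\<^sup>2 * Gh\<^sup>2 * Rx\<^sup>2 * N / 2)"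
      using sm F(7) unfolding N_def by (intro mult_right_mono) auto
    finally show ?thesis by simp
  qed
  have total: "y k * (net \<phi> a m d (\<lambda>p. W p - \<alpha> * gradf \<phi> a m d n x y W p) (x k) - net \<phi> a m d W (x k))
      \<ge> (\<Sum>j<m. y k * a j * ph j k * \<delta> j) - (\<Sum>j<m. (1 / sqrt (real m)) * (H * (\<delta> j)\<^sup>2 / 2))"
  proof -
    have "(\<Sum>j<m. y k * a j * ph j k * \<delta> j - (1 / sqrt (real m)) * (H * (\<delta> j)\<^sup>2 / 2)) \<le> (\<Sum>j<m. y k * (a j * (\<phi> (s j + \<delta> j) - \<phi> (s j))))"
      using term_lb by (intro sum_mono) auto
    then show ?thesis unfolding inc by (simp add: sum_subtractf sum_distrib_left)
  qed
  have R1: "1 \<le> (Rx / Rn)\<^sup>2" using Rn by (simp add: le_divide_eq)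
  have K: "(\<alpha> * H * Rx\<^sup>2) * (2 * C * real n) \<le> \<gamma>\<^sup>2"
  proof -
    have "(\<alpha> * H * Rx\<^sup>2) * (2 * C * real n) * 1 \<le> (\<alpha> * H * Rx\<^sup>2) * (2 * C * real n) * (Rx / Rn)\<^sup>2"
      using R1 alpha F(7) C nr by (intro mult_left_mono) auto
    also have "\<dots> \<le> \<gamma>\<^sup>2" using st unfolding Rx_def Rn_def by (simp add: mult_ac)
    finally show ?thesis by simp
  qed
  have K': "\<alpha> * H * Rx\<^sup>2 \<le> \<gamma>\<^sup>2 / (2 * C * real n)" using K C nr by (simp add: le_divide_eq)
  have N_ge: "Rn\<^sup>2 \<le> N" unfolding N_def using vk Rn by (intro power_mono) auto
  have a1: "\<alpha> * g k * \<gamma>\<^sup>2 * N / (2 * real n) \<ge> (\<alpha> * \<gamma>\<^sup>2 * N / (2 * real n)) * (Gh / C)"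
  proof -
    have "Gh / C \<le> g k" using Gh_le C by (simp add: divide_le_eq mult.commute)
    then have "(\<alpha> * \<gamma>\<^sup>2 * N / (2 * real n)) * (Gh / C) \<le> (\<alpha> * \<gamma>\<^sup>2 * N / (2 * real n)) * g k"
      using alpha nr unfolding N_def by (intro mult_left_mono) auto
    then show ?thesis by (simp add: mult_ac)
  qed
  have a2: "H * \<alpha>\<^sup>2 * Gh\<^sup>2 * Rx\<^sup>2 * N / 2 \<le> (\<gamma>\<^sup>2 / (2 * C * real n)) * (\<alpha> * Gh * N / 2)"
  proof -
    have "Gh\<^sup>2 \<le> Gh" using Gh_nn Gh_le1 by (simp add: power2_eq_square mult_left_le_one_le)
    then have b: "\<alpha> * Gh\<^sup>2 * N / 2 \<le> \<alpha> * Gh * N / 2" using alpha unfolding N_def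
      by (intro divide_right_mono mult_right_mono mult_left_mono) auto
    have "H * \<alpha>\<^sup>2 * Gh\<^sup>2 * Rx\<^sup>2 * N / 2 = (\<alpha> * H * Rx\<^sup>2) * (\<alpha> * Gh\<^sup>2 * N / 2)"
      by (simp add: power2_eq_square mult_ac)
    also have "\<dots> \<le> (\<gamma>\<^sup>2 / (2 * C * real n)) * (\<alpha> * Gh * N / 2)"
      using K' b alpha F(7) Gh_nn C nr unfolding N_def by (intro mult_mono) auto
    finally show ?thesis .
  qed
  have a3: "(\<alpha> * \<gamma>\<^sup>2 * N / (2 * real n)) * (Gh / C) - (\<gamma>\<^sup>2 / (2 * C * real n)) * (\<alpha> * Gh * N / 2)
     = \<alpha> * \<gamma>\<^sup>2 * Gh / (4 * C * real n) * N"
    using C nr by (simp add: field_simps)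
  have a4: "\<alpha> * \<gamma>\<^sup>2 * Gh / (4 * C * real n) * Rn\<^sup>2 \<le> \<alpha> * \<gamma>\<^sup>2 * Gh / (4 * C * real n) * N"
    using N_ge alpha Gh_nn C nr by (intro mult_left_mono) auto
  have a5: "\<alpha> * \<gamma>\<^sup>2 * (Rmin n d x)\<^sup>2 / (4 * C * real n) * emp_G \<phi> a m d n x y W = \<alpha> * \<gamma>\<^sup>2 * Gh / (4 * C * real n) * Rn\<^sup>2"
    unfolding Gh_eq Rn_def by simp
  show ?thesis using total first_lb second a1 a2 a3 a4 a5 by linarith
qed

lemma normal_exp_integral:
  assumes "0 < \<omega>"
  shows "(\<integral>\<^sup>+z. ennreal (exp (z\<^sup>2 / (4 * \<omega>\<^sup>2))) \<partial>density lborel (normal_density 0 \<omega>)) = ennreal (sqrt 2)"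
proof -
  have pt: "normal_density 0 \<omega> z * exp (z\<^sup>2 / (4 * \<omega>\<^sup>2)) = sqrt 2 * normal_density 0 (sqrt 2 * \<omega>) z" for z
  proof -
    have sq: "(sqrt 2 * \<omega>)\<^sup>2 = 2 * \<omega>\<^sup>2" by (simp add: power_mult_distrib)
    have e: "exp (-(z - 0)\<^sup>2 / (2 * \<omega>\<^sup>2)) * exp (z\<^sup>2 / (4 * \<omega>\<^sup>2)) = exp (-(z - 0)\<^sup>2 / (2 * (2 * \<omega>\<^sup>2)))"
      unfolding exp_add[symmetric] using assms by (simp add: field_simps)
    have s: "sqrt (2 * pi * (2 * \<omega>\<^sup>2)) = sqrt 2 * sqrt (2 * pi * \<omega>\<^sup>2)"
      by (simp add: real_sqrt_mult[symmetric] mult_ac)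
    have "normal_density 0 \<omega> z * exp (z\<^sup>2 / (4 * \<omega>\<^sup>2)) = 1 / sqrt (2 * pi * \<omega>\<^sup>2) * exp (-(z - 0)\<^sup>2 / (2 * (2 * \<omega>\<^sup>2)))"
      unfolding normal_density_def by (simp only: mult.assoc e)
    also have "\<dots> = sqrt 2 * (1 / sqrt (2 * pi * (2 * \<omega>\<^sup>2)) * exp (-(z - 0)\<^sup>2 / (2 * (2 * \<omega>\<^sup>2))))"
      unfolding s by simp
    also have "\<dots> = sqrt 2 * normal_density 0 (sqrt 2 * \<omega>) z"
      unfolding normal_density_def sq ..
    finally show ?thesis .
  qed
  have "(\<integral>\<^sup>+z. ennreal (exp (z\<^sup>2 / (4 * \<omega>\<^sup>2))) \<partial>density lborel (normal_density 0 \<omega>))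
     = (\<integral>\<^sup>+z. ennreal (normal_density 0 \<omega> z) * ennreal (exp (z\<^sup>2 / (4 * \<omega>\<^sup>2))) \<partial>lborel)"
    by (subst nn_integral_density) auto
  also have "\<dots> = (\<integral>\<^sup>+z. ennreal (sqrt 2) * ennreal (normal_density 0 (sqrt 2 * \<omega>) z) \<partial>lborel)"
    by (intro nn_integral_cong) (simp add: pt ennreal_mult'[symmetric] ennreal_mult[symmetric])
  also have "\<dots> = ennreal (sqrt 2) * (\<integral>\<^sup>+z. ennreal (normal_density 0 (sqrt 2 * \<omega>) z) \<partial>lborel)"
    by (subst nn_integral_cmult) auto
  also have "(\<integral>\<^sup>+z. ennreal (normal_density 0 (sqrt 2 * \<omega>) z) \<partial>lborel) = 1"
  proof -
    have "prob_space (density lborel (normal_density 0 (sqrt 2 * \<omega>)))"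
      using assms by (intro prob_space_normal_density) auto
    then have "emeasure (density lborel (normal_density 0 (sqrt 2 * \<omega>))) UNIV = 1"
      using prob_space.emeasure_space_1 by fastforce
    then show ?thesis by (simp add: emeasure_density)
  qed
  finally show ?thesis by simp
qed

lemma chernoff_frob:
  fixes m d :: nat and \<omega> T :: real
  assumes om: "0 < \<omega>"
  defines "I \<equiv> {..<m} \<times> {..<d}"
  shows "emeasure (init_measure m d \<omega>) {W \<in> space (init_measure m d \<omega>). T < (\<Sum>p\<in>I. (W p)\<^sup>2)}
     \<le> ennreal (sqrt 2 ^ (m * d) * exp (- T / (4 * \<omega>\<^sup>2)))"
proof -
  define N where "N = density lborel (normal_density 0 \<omega>)"
  define M where "M = init_measure m d \<omega>"
  have M: "M = PiM I (\<lambda>_. N)" unfolding M_def init_measure_def N_def I_def ..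
  have pN: "prob_space N" unfolding N_def using om by (rule prob_space_normal_density)
  interpret P: product_prob_space "\<lambda>_. N" I
    by (intro product_prob_spaceI) (rule pN)
  have finI: "finite I" unfolding I_def by simp
  define c where "c = 4 * \<omega>\<^sup>2"
  have c: "0 < c" unfolding c_def using om by simp
  define S where "S W = (\<Sum>p\<in>I. (W p)\<^sup>2)" for W :: "nat \<times> nat \<Rightarrow> real"
  have mN: "measurable M N = measurable M borel" by (rule measurable_cong_sets) (auto simp: N_def)
  have comp: "(\<lambda>x. x p) \<in> borel_measurable M" if "p \<in> I" for p
    using measurable_component_singleton[OF that, of "\<lambda>_. N"] mN unfolding M by simp
  have Smeas[measurable]: "S \<in> borel_measurable M" unfolding S_def
    by (intro borel_measurable_sum borel_measurable_power comp)
  have "emeasure M {W \<in> space M. T < S W} = (\<integral>\<^sup>+W. indicator {W \<in> space M. T < S W} W \<partial>M)"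
    by (intro nn_integral_indicator[symmetric]) measurable
  also have "\<dots> \<le> (\<integral>\<^sup>+W. ennreal (exp (- T / c)) * (\<Prod>p\<in>I. ennreal (exp ((W p)\<^sup>2 / c))) \<partial>M)"
  proof (intro nn_integral_mono)
    fix W assume "W \<in> space M"
    have "exp ((S W - T) / c) = exp (- T / c) * (\<Prod>p\<in>I. exp ((W p)\<^sup>2 / c))"
      unfolding S_def using finI by (simp add: exp_sum[symmetric] exp_add[symmetric] sum_divide_distrib diff_divide_distrib)
    moreover have "indicator {W \<in> space M. T < S W} W \<le> ennreal (exp ((S W - T) / c))"
      using c by (auto simp: indicator_def)
    ultimately show "indicator {W \<in> space M. T < S W} W \<le> ennreal (exp (- T / c)) * (\<Prod>p\<in>I. ennreal (exp ((W p)\<^sup>2 / c)))"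
      by (simp add: ennreal_mult' prod_ennreal)
  qed
  also have "\<dots> = ennreal (exp (- T / c)) * (\<integral>\<^sup>+W. (\<Prod>p\<in>I. ennreal (exp ((W p)\<^sup>2 / c))) \<partial>M)"
    by (subst nn_integral_cmult)
       (auto intro!: borel_measurable_prod_ennreal measurable_compose[OF comp] simp del: )
  also have "(\<integral>\<^sup>+W. (\<Prod>p\<in>I. ennreal (exp ((W p)\<^sup>2 / c))) \<partial>M) = (\<Prod>p\<in>I. \<integral>\<^sup>+z. ennreal (exp (z\<^sup>2 / c)) \<partial>N)"
    unfolding M by (rule P.product_nn_integral_prod[OF finI]) (simp add: N_def)
  also have "\<dots> = (\<Prod>p\<in>I. ennreal (sqrt 2))"
    unfolding N_def c_def using normal_exp_integral[OF om] by simp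
  also have "\<dots> = ennreal (sqrt 2 ^ (m * d))"
    unfolding I_def by (simp add: prod_ennreal card_cartesian_product ennreal_power)
  finally show ?thesis unfolding M_def c_def S_def by (simp add: ennreal_mult'[symmetric] mult.commute)
qed

lemma net_sq_bound:
  assumes phi: "leaky_smooth \<phi> \<gamma> H" and gam: "0 \<le> \<gamma>"
    and a: "\<forall>j<m. a j = 1 / sqrt (real m) \<or> a j = - 1 / sqrt (real m)"
  shows "(net \<phi> a m d W z)\<^sup>2 \<le> (vnorm d z)\<^sup>2 * (\<Sum>p\<in>{..<m} \<times> {..<d}. (W p)\<^sup>2)"
proof (cases "m = 0")
  case True thus ?thesis by (simp add: net_def)
next
  case False
  have absa: "\<bar>a j\<bar> = 1 / sqrt (real m)" if "j < m" for j using a that by auto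
  have "\<bar>net \<phi> a m d W z\<bar> \<le> (\<Sum>j<m. \<bar>a j * \<phi> (pre d W z j)\<bar>)" unfolding net_pre by (rule sum_abs)
  also have "\<dots> \<le> (\<Sum>j<m. 1 / sqrt (real m) * \<bar>pre d W z j\<bar>)"
    using absa phi_abs[OF phi gam] by (intro sum_mono) (auto simp: abs_mult intro: mult_left_mono divide_right_mono)
  also have "\<dots> = 1 / sqrt (real m) * (\<Sum>j<m. 1 * \<bar>pre d W z j\<bar>)" by (simp add: sum_distrib_left)
  finally have b1: "\<bar>net \<phi> a m d W z\<bar> \<le> 1 / sqrt (real m) * (\<Sum>j<m. 1 * \<bar>pre d W z j\<bar>)" .
  have "(net \<phi> a m d W z)\<^sup>2 \<le> (1 / sqrt (real m) * (\<Sum>j<m. 1 * \<bar>pre d W z j\<bar>))\<^sup>2"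
    using b1 by (metis abs_ge_zero order_trans power2_abs power_mono)
  also have "\<dots> = 1 / real m * (\<Sum>j<m. 1 * \<bar>pre d W z j\<bar>)\<^sup>2" by (simp add: power_mult_distrib power_divide)
  also have "\<dots> \<le> 1 / real m * ((\<Sum>j<m. 1\<^sup>2) * (\<Sum>j<m. \<bar>pre d W z j\<bar>\<^sup>2))"
    by (intro mult_left_mono Cauchy_Schwarz_ineq_sum) auto
  also have "\<dots> = (\<Sum>j<m. (pre d W z j)\<^sup>2)" using False by simp
  also have "\<dots> \<le> (\<Sum>j<m. (\<Sum>k<d. (W (j,k))\<^sup>2) * (\<Sum>k<d. (z k)\<^sup>2))"
    unfolding pre_def by (intro sum_mono Cauchy_Schwarz_ineq_sum)
  also have "\<dots> = (\<Sum>k<d. (z k)\<^sup>2) * (\<Sum>p\<in>{..<m} \<times> {..<d}. (W p)\<^sup>2)"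
  proof -
    have "(\<Sum>p\<in>{..<m} \<times> {..<d}. (W p)\<^sup>2) = (\<Sum>j<m. \<Sum>k<d. (W (j,k))\<^sup>2)"
      by (simp add: sum.cartesian_product)
    then show ?thesis by (simp add: sum_distrib_right[symmetric] sum_distrib_left[symmetric] mult.commute)
  qed
  also have "(\<Sum>k<d. (z k)\<^sup>2) = (vnorm d z)\<^sup>2" using ip_self(1)[of d z] unfolding ip_def by (simp add: power2_eq_square)
  finally show ?thesis .
qed

lemma phi_meas:
  assumes phi: "leaky_smooth \<phi> \<gamma> H"
  shows "\<phi> \<in> borel_measurable borel" "deriv \<phi> \<in> borel_measurable borel"
proof -
  note F = ls_facts[OF phi]
  have "continuous_on UNIV \<phi>" using F(2) by (intro continuous_at_imp_continuous_on) (auto intro: DERIV_isCont)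
  then show "\<phi> \<in> borel_measurable borel" by (rule borel_measurable_continuous_onI)
  have "continuous_on UNIV (deriv \<phi>)" using F(3) by (intro continuous_at_imp_continuous_on) (auto intro: DERIV_isCont)
  then show "deriv \<phi> \<in> borel_measurable borel" by (rule borel_measurable_continuous_onI)
qed

lemma gfun_meas: "gfun \<in> borel_measurable borel"
  unfolding gfun_def[abs_def] by measurable

lemma net_meas:
  assumes V: "\<And>p. p \<in> {..<m} \<times> {..<d} \<Longrightarrow> (\<lambda>W. V W p) \<in> borel_measurable M"
    and phim: "\<phi> \<in> borel_measurable borel"
  shows "(\<lambda>W. net \<phi> a m d (V W) z) \<in> borel_measurable M"
  unfolding net_def
  by (intro borel_measurable_sum borel_measurable_times borel_measurable_const measurable_compose[OF _ phim] V) auto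

lemma pre_meas:
  assumes V: "\<And>p. p \<in> {..<m} \<times> {..<d} \<Longrightarrow> (\<lambda>W. V W p) \<in> borel_measurable M" and j: "j < m"
  shows "(\<lambda>W. pre d (V W) z j) \<in> borel_measurable M"
  unfolding pre_def
  by (intro borel_measurable_sum borel_measurable_times borel_measurable_const V) (use j in auto)

lemma step_meas:
  assumes V: "\<And>p. p \<in> {..<m} \<times> {..<d} \<Longrightarrow> (\<lambda>W. W p) \<in> borel_measurable M"
    and phi: "leaky_smooth \<phi> \<gamma> H"
  shows "(\<lambda>W. net \<phi> a m d (\<lambda>p. W p - \<alpha> * gradf \<phi> a m d n x y W p) z) \<in> borel_measurable M"
proof (rule net_meas[OF _ phi_meas(1)[OF phi]])
  fix p assume p: "p \<in> {..<m} \<times> {..<d}"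
  obtain j k where jk: "p = (j,k)" by force
  have "(\<lambda>W. gfun (y i * net \<phi> a m d W (x i))) \<in> borel_measurable M" for i
    by (intro measurable_compose[OF _ gfun_meas] borel_measurable_times borel_measurable_const net_meas[OF V phi_meas(1)[OF phi]])
  moreover have "(\<lambda>W. deriv \<phi> (pre d W (x i) j)) \<in> borel_measurable M" for i
    using p jk by (intro measurable_compose[OF _ phi_meas(2)[OF phi]] pre_meas[OF V]) auto
  ultimately show "(\<lambda>W. W p - \<alpha> * gradf \<phi> a m d n x y W p) \<in> borel_measurable M"
    using p jk V[OF p] unfolding gradf_def
    by (auto intro!: borel_measurable_diff borel_measurable_times borel_measurable_sum borel_measurable_const)
qed

lemma comp_meas:
  assumes "p \<in> {..<m} \<times> {..<d}"
  shows "(\<lambda>W. W p) \<in> borel_measurable (init_measure m d \<omega>)"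
proof -
  have mN: "measurable (init_measure m d \<omega>) (density lborel (normal_density 0 \<omega>)) = measurable (init_measure m d \<omega>) borel"
    by (rule measurable_cong_sets) auto
  show ?thesis using measurable_component_singleton[OF assms, of "\<lambda>_. density lborel (normal_density 0 \<omega>)"] mN
    unfolding init_measure_def by simp
qed

lemma init_prob: "0 < \<omega> \<Longrightarrow> prob_space (init_measure m d \<omega>)"
  unfolding init_measure_def by (intro prob_space_PiM prob_space_normal_density)

lemma good_event:
  fixes \<phi> :: "real \<Rightarrow> real" and \<gamma> H :: real
    and n m d :: nat and x :: "nat \<Rightarrow> nat \<Rightarrow> real" and y :: "nat \<Rightarrow> real"
    and a :: "nat \<Rightarrow> real" and \<alpha> \<omega> \<delta> :: real
  defines "Rx \<equiv> Rmax n d x" and "Rn \<equiv> Rmin n d x"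
    and "CR \<equiv> 10 * (Rmax n d x / Rmin n d x)\<^sup>2 / \<gamma>\<^sup>2 + 10"
    and "M \<equiv> init_measure m d \<omega>"
    and "S \<equiv> (\<lambda>W. \<Sum>p\<in>{..<m} \<times> {..<d}. (W p)\<^sup>2)"
    and "B \<equiv> \<alpha> * \<gamma>\<^sup>2 * (Rmin n d x)\<^sup>2 / (64 * real n)"
  assumes phi: "leaky_smooth \<phi> \<gamma> H" and gam: "0 < \<gamma>"
    and n: "1 \<le> n" and m: "1 \<le> m" and d: "1 \<le> d"
    and a: "\<forall>j<m. a j = 1 / sqrt (real m) \<or> a j = - 1 / sqrt (real m)"
    and xnz: "\<forall>i<n. vnorm d (x i) \<noteq> 0"
    and alpha: "0 < \<alpha>" and omega: "0 < \<omega>"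
    and delta: "0 < \<delta>" "\<delta> < 1"
    and A1: "\<alpha> \<le> \<gamma>\<^sup>2 / (5 * real n * Rx\<^sup>2 * (Rx / Rn)\<^sup>2 * CR * max 1 H)"
    and A2: "\<omega> \<le> \<alpha> * \<gamma>\<^sup>2 * Rn / (72 * (Rx / Rn) * CR * real n * sqrt (real m * real d * ln (4 * real m / \<delta>)))"
  shows "{W \<in> space M. S W \<le> B\<^sup>2 / (2 * Rx\<^sup>2)} \<in> sets M"
    "measure M {W \<in> space M. S W \<le> B\<^sup>2 / (2 * Rx\<^sup>2)} \<ge> 1 - \<delta>"
    "\<And>W i. S W \<le> B\<^sup>2 / (2 * Rx\<^sup>2) \<Longrightarrow> i < n \<Longrightarrow> \<bar>net \<phi> a m d W (x i)\<bar> < B"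
    "0 < B" "B \<le> 1"
proof -
  note F = ls_facts[OF phi]
  note RF = R_facts[OF n xnz]
  have Rn: "0 < Rn" "Rn \<le> Rx" using RF unfolding Rn_def Rx_def by auto
  have R1: "1 \<le> (Rx / Rn)\<^sup>2" using Rn by (simp add: le_divide_eq)
  have CR: "10 \<le> CR" unfolding CR_def using gam by simp
  have nr: "1 \<le> real n" using n by simp
  show "0 < B" unfolding B_def using alpha gam RF n by simp
  define T where "T = B\<^sup>2 / (2 * Rx\<^sup>2)"
  have Smeas: "S \<in> borel_measurable M" unfolding S_def M_def
    by (intro borel_measurable_sum borel_measurable_power comp_meas)
  show sets: "{W \<in> space M. S W \<le> B\<^sup>2 / (2 * Rx\<^sup>2)} \<in> sets M" using Smeas by measurable
  have maxH: "1 \<le> max 1 H" by simp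
  have D: "50 * Rx\<^sup>2 \<le> 5 * real n * Rx\<^sup>2 * (Rx / Rn)\<^sup>2 * CR * max 1 H"
  proof -
    have "50 * Rx\<^sup>2 = 5 * 1 * Rx\<^sup>2 * 1 * 10 * 1" by simp
    also have "\<dots> \<le> 5 * real n * Rx\<^sup>2 * (Rx / Rn)\<^sup>2 * CR * max 1 H"
      using nr R1 CR maxH by (intro mult_mono) auto
    finally show ?thesis .
  qed
  have Rxp: "0 < Rx" using Rn by simp
  have aRx: "\<alpha> * (50 * Rx\<^sup>2) \<le> 1"
  proof -
    have Dp: "0 < 5 * real n * Rx\<^sup>2 * (Rx / Rn)\<^sup>2 * CR * max 1 H" using D Rxp by (smt (verit) zero_less_power)
    have "\<alpha> * (5 * real n * Rx\<^sup>2 * (Rx / Rn)\<^sup>2 * CR * max 1 H) \<le> \<gamma>\<^sup>2"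
      using A1 Dp by (simp add: le_divide_eq)
    moreover have "\<alpha> * (50 * Rx\<^sup>2) \<le> \<alpha> * (5 * real n * Rx\<^sup>2 * (Rx / Rn)\<^sup>2 * CR * max 1 H)"
      using D alpha by (intro mult_left_mono) auto
    moreover have "\<gamma>\<^sup>2 \<le> 1" using F(8) gam by (simp add: power_le_one)
    ultimately show ?thesis by linarith
  qed
  show "B \<le> 1"
  proof -
    have g1: "\<gamma>\<^sup>2 \<le> 1" using F(8) gam by (simp add: power_le_one)
    have "B = \<alpha> * \<gamma>\<^sup>2 * Rn\<^sup>2 / (64 * real n)" unfolding B_def Rn_def ..
    also have "\<dots> \<le> \<alpha> * 1 * Rx\<^sup>2 / (64 * 1)"
      using g1 Rn alpha nr by (intro frac_le mult_mono power_mono) auto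
    also have "\<dots> \<le> 1" using aRx by simp
    finally show ?thesis .
  qed
  show "\<bar>net \<phi> a m d W (x i)\<bar> < B" if SW: "S W \<le> B\<^sup>2 / (2 * Rx\<^sup>2)" and i: "i < n" for W i
  proof -
    have v: "(vnorm d (x i))\<^sup>2 \<le> Rx\<^sup>2" using RF(3)[OF i] ip_self(2) unfolding Rx_def by (intro power_mono) auto
    have Sn: "0 \<le> S W" unfolding S_def by (intro sum_nonneg) auto
    have "(net \<phi> a m d W (x i))\<^sup>2 \<le> (vnorm d (x i))\<^sup>2 * S W"
      unfolding S_def by (rule net_sq_bound[OF phi _ a]) (use gam in auto)
    also have "\<dots> \<le> Rx\<^sup>2 * (B\<^sup>2 / (2 * Rx\<^sup>2))" using v SW Sn by (intro mult_mono) auto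
    also have "\<dots> = B\<^sup>2 / 2" using Rxp by simp
    also have "\<dots> < B\<^sup>2" using \<open>0 < B\<close> by simp
    finally have "(net \<phi> a m d W (x i))\<^sup>2 < B\<^sup>2" .
    then have "\<bar>net \<phi> a m d W (x i)\<bar>\<^sup>2 < B\<^sup>2" by simp
    then show ?thesis using \<open>0 < B\<close> power2_less_imp_less by fastforce
  qed
  define K where "K = real m * real d"
  define L where "L = ln (4 * real m / \<delta>)"
  have K1: "1 \<le> K"
  proof -
    have "1 * 1 \<le> real m * real d" using m d by (intro mult_mono) auto
    then show ?thesis unfolding K_def by simp
  qed
  have L1: "1 \<le> L"
  proof -
    have "exp 1 \<le> 4 * real m / \<delta>"
    proof -
      have "exp 1 \<le> (3::real)" using exp_le by simp
      also have "\<dots> \<le> 4 * real m" using m by simp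
      also have "\<dots> \<le> 4 * real m / \<delta>" using delta m by (simp add: le_divide_eq)
      finally show ?thesis .
    qed
    then show ?thesis unfolding L_def using delta m by (simp add: ln_ge_iff)
  qed
  have eL: "exp (- L) \<le> \<delta>"
  proof -
    have "exp (- L) = \<delta> / (4 * real m)" unfolding L_def using delta m by (simp add: exp_minus)
    also have "\<dots> \<le> \<delta>" using delta m by (simp add: divide_le_eq)
    finally show ?thesis .
  qed
  define Y where "Y = \<alpha> * \<gamma>\<^sup>2 * Rn\<^sup>2 / (72 * Rx * CR * real n)"
  have CRp: "0 < CR" using CR by simp
  have om2: "\<omega>\<^sup>2 * (K * L) \<le> Y\<^sup>2"
  proof -
    have KLp: "0 < sqrt (K * L)" using K1 L1 by simp
    have "\<alpha> * \<gamma>\<^sup>2 * Rn / (72 * (Rx / Rn) * CR * real n * sqrt (K * L)) = Y / sqrt (K * L)"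
      unfolding Y_def using Rn CRp nr KLp by (simp add: field_simps power2_eq_square)
    then have "\<omega> \<le> Y / sqrt (K * L)" using A2 unfolding K_def L_def by simp
    then have "\<omega> * sqrt (K * L) \<le> Y" using KLp by (simp add: le_divide_eq)
    then have "(\<omega> * sqrt (K * L))\<^sup>2 \<le> Y\<^sup>2" using omega KLp by (intro power_mono) auto
    then show ?thesis using K1 L1 by (simp add: power_mult_distrib)
  qed
  have BY: "B = Y * (72 * CR * Rx / 64)" unfolding B_def Y_def Rn_def[symmetric] using Rn CRp nr by (simp add: field_simps)
  have TY: "B\<^sup>2 / (2 * Rx\<^sup>2) = Y\<^sup>2 * ((72 * CR)\<^sup>2 / 8192)"
    unfolding BY using Rn by (simp add: power_mult_distrib field_simps)
  have CRb: "(8::real) \<le> (72 * CR)\<^sup>2 / 8192" 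
  proof -
    have "10 * 10 \<le> CR * CR" using CR by (intro mult_mono) auto
    then show ?thesis by (simp add: power2_eq_square)
  qed
  have Tbig: "2 * (K * L) \<le> B\<^sup>2 / (2 * Rx\<^sup>2) / (4 * \<omega>\<^sup>2)"
  proof -
    have "8 * (\<omega>\<^sup>2 * (K * L)) \<le> 8 * Y\<^sup>2" using om2 by simp
    also have "\<dots> \<le> Y\<^sup>2 * ((72 * CR)\<^sup>2 / 8192)" using CRb by (simp add: mult.commute mult_left_mono)
    finally show ?thesis unfolding TY using omega by (simp add: le_divide_eq algebra_simps)
  qed
  have s2: "sqrt 2 ^ (m * d) \<le> exp (K / 2)"
  proof -
    have "sqrt 2 \<le> exp (1 / 2)"
    proof -
      have "sqrt 2 \<le> sqrt ((3 / 2)\<^sup>2)" by (intro real_sqrt_le_mono) (simp add: power2_eq_square)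
      also have "\<dots> = 3 / 2" by simp
      also have "\<dots> \<le> 1 + 1 / 2" by simp
      also have "\<dots> \<le> exp (1 / 2)" by (rule exp_ge_add_one_self)
      finally show ?thesis .
    qed
    then have "sqrt 2 ^ (m * d) \<le> exp (1 / 2) ^ (m * d)" by (intro power_mono) auto
    also have "\<dots> = exp (K / 2)" unfolding K_def by (simp add: exp_of_nat_mult[symmetric])
    finally show ?thesis .
  qed
  have real_bd: "sqrt 2 ^ (m * d) * exp (- (B\<^sup>2 / (2 * Rx\<^sup>2)) / (4 * \<omega>\<^sup>2)) \<le> \<delta>"
  proof -
    have "sqrt 2 ^ (m * d) * exp (- (B\<^sup>2 / (2 * Rx\<^sup>2)) / (4 * \<omega>\<^sup>2)) \<le> exp (K / 2) * exp (- (2 * (K * L)))"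
      using s2 Tbig by (intro mult_mono) auto
    also have "\<dots> = exp (K / 2 - 2 * (K * L))" by (simp add: exp_add[symmetric])
    also have "\<dots> \<le> exp (- L)"
    proof -
      have "K * L \<ge> L" using K1 L1 by (simp add: mult_right_mono)
      moreover have "K * L \<ge> K" using K1 L1 by (simp add: mult_left_mono)
      ultimately have "K / 2 - 2 * (K * L) \<le> - L" using K1 by linarith
      then show ?thesis by simp
    qed
    also have "\<dots> \<le> \<delta>" by (rule eL)
    finally show ?thesis .
  qed
  interpret P: prob_space M unfolding M_def using omega by (rule init_prob)
  have bad: "emeasure M {W \<in> space M. B\<^sup>2 / (2 * Rx\<^sup>2) < S W} \<le> ennreal \<delta>"
  proof -
    have "emeasure M {W \<in> space M. B\<^sup>2 / (2 * Rx\<^sup>2) < S W} \<le> ennreal (sqrt 2 ^ (m * d) * exp (- (B\<^sup>2 / (2 * Rx\<^sup>2)) / (4 * \<omega>\<^sup>2)))"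
      unfolding M_def S_def by (rule chernoff_frob[OF omega])
    also have "\<dots> \<le> ennreal \<delta>" using real_bd by (rule ennreal_leI)
    finally show ?thesis .
  qed
  have badm: "{W \<in> space M. B\<^sup>2 / (2 * Rx\<^sup>2) < S W} \<in> sets M" using Smeas by measurable
  have "measure M {W \<in> space M. B\<^sup>2 / (2 * Rx\<^sup>2) < S W} \<le> \<delta>"
    using bad delta unfolding P.emeasure_eq_measure by (simp add: ennreal_le_iff)
  moreover have "{W \<in> space M. S W \<le> B\<^sup>2 / (2 * Rx\<^sup>2)} = space M - {W \<in> space M. B\<^sup>2 / (2 * Rx\<^sup>2) < S W}"
    by auto
  ultimately show "measure M {W \<in> space M. S W \<le> B\<^sup>2 / (2 * Rx\<^sup>2)} \<ge> 1 - \<delta>"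
    using P.prob_compl[OF badm] by simp
qed

lemma gfun_quarter: "z \<le> 1 \<Longrightarrow> 1 / 4 \<le> gfun z"
proof -
  assume z: "z \<le> 1"
  have "exp z \<le> exp 1" using z by simp
  also have "exp 1 \<le> (3::real)" using exp_le by simp
  finally have "1 + exp z \<le> 4" by simp
  then show ?thesis unfolding gfun_def by (simp add: divide_le_eq add_pos_pos)
qed

theorem mainTheorem11:
  fixes \<phi> :: "real \<Rightarrow> real" and \<gamma> H :: real
    and n m d :: nat and x :: "nat \<Rightarrow> nat \<Rightarrow> real" and y :: "nat \<Rightarrow> real"
    and a :: "nat \<Rightarrow> real" and \<alpha> \<omega> \<delta> :: real
  defines "f \<equiv> net \<phi> a m d"
    and "L \<equiv> emp_loss \<phi> a m d n x y"
    and "G \<equiv> emp_G \<phi> a m d n x y"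
    and "Rmx \<equiv> Rmax n d x" and "Rmn \<equiv> Rmin n d x"
    and "R \<equiv> Rmax n d x / Rmin n d x"
    and "CR \<equiv> 10 * (Rmax n d x / Rmin n d x)\<^sup>2 / \<gamma>\<^sup>2 + 10"
    and "M \<equiv> init_measure m d \<omega>"
  assumes phi: "leaky_smooth \<phi> \<gamma> H" and gam: "0 < \<gamma>"
    and n: "1 \<le> n" and m: "1 \<le> m" and d: "1 \<le> d"
    and y: "\<forall>i<n. y i = 1 \<or> y i = -1"
    and a: "\<forall>j<m. a j = 1 / sqrt (real m) \<or> a j = - 1 / sqrt (real m)"
    and xnz: "\<forall>i<n. vnorm d (x i) \<noteq> 0"
    and alpha: "0 < \<alpha>" and omega: "0 < \<omega>"
    and delta: "0 < \<delta>" "\<delta> < 1"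
  shows
   "(\<alpha> \<le> \<gamma>\<^sup>2 / (5 * real n * Rmx\<^sup>2 * R\<^sup>2 * CR * max 1 H)
      \<and> \<omega> \<le> \<alpha> * \<gamma>\<^sup>2 * Rmn / (72 * R * CR * real n * sqrt (real m * real d * ln (4 * real m / \<delta>)))
      \<longrightarrow> measure M {W \<in> space M. \<forall>i<n. \<forall>j<n.
              exp (- (y i * f W (x i))) / exp (- (y j * f W (x j))) \<le> exp 2} \<ge> 1 - \<delta>)
  \<and> (\<forall>W0 t C'. C' > 1
      \<and> (\<forall>i<n. \<forall>j<n. gfun (y i * f (gd L \<alpha> W0 t) (x i)) / gfun (y j * f (gd L \<alpha> W0 t) (x j)) \<le> C')
      \<and> (\<forall>k<n. \<forall>i<n. i \<noteq> k \<longrightarrow>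
            (vnorm d (x k))\<^sup>2 \<ge> 2 / \<gamma>\<^sup>2 * C' * real n * \<bar>ip d (x i) (x k)\<bar>)
      \<and> \<alpha> * (2 * H * C' * R\<^sup>2 * Rmx\<^sup>2 * real n) \<le> \<gamma>\<^sup>2
      \<longrightarrow> (\<forall>k<n. y k * (f (gd L \<alpha> W0 (Suc t)) (x k) - f (gd L \<alpha> W0 t) (x k))
              \<ge> \<alpha> * \<gamma>\<^sup>2 * Rmn\<^sup>2 / (4 * C' * real n) * G (gd L \<alpha> W0 t)))
  \<and> ((\<forall>k<n. \<forall>i<n. i \<noteq> k \<longrightarrow>
            (vnorm d (x k))\<^sup>2 \<ge> 8 / \<gamma>\<^sup>2 * real n * \<bar>ip d (x i) (x k)\<bar>)
      \<and> \<alpha> \<le> \<gamma>\<^sup>2 / (5 * real n * Rmx\<^sup>2 * R\<^sup>2 * CR * max 1 H)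
      \<and> \<omega> \<le> \<alpha> * \<gamma>\<^sup>2 * Rmn / (72 * R * CR * real n * sqrt (real m * real d * ln (4 * real m / \<delta>)))
      \<longrightarrow> measure M {W \<in> space M. \<forall>k<n. y k * f (gd L \<alpha> W 1) (x k) > 0} \<ge> 1 - \<delta>)"
proof -
  note F = ls_facts[OF phi]
  note RF = R_facts[OF n xnz]
  have partB: "\<forall>W0 t C'. C' > 1
      \<and> (\<forall>i<n. \<forall>j<n. gfun (y i * f (gd L \<alpha> W0 t) (x i)) / gfun (y j * f (gd L \<alpha> W0 t) (x j)) \<le> C')
      \<and> (\<forall>k<n. \<forall>i<n. i \<noteq> k \<longrightarrow>
            (vnorm d (x k))\<^sup>2 \<ge> 2 / \<gamma>\<^sup>2 * C' * real n * \<bar>ip d (x i) (x k)\<bar>)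
      \<and> \<alpha> * (2 * H * C' * R\<^sup>2 * Rmx\<^sup>2 * real n) \<le> \<gamma>\<^sup>2
      \<longrightarrow> (\<forall>k<n. y k * (f (gd L \<alpha> W0 (Suc t)) (x k) - f (gd L \<alpha> W0 t) (x k))
              \<ge> \<alpha> * \<gamma>\<^sup>2 * Rmn\<^sup>2 / (4 * C' * real n) * G (gd L \<alpha> W0 t))"
  proof (rule allI, rule allI, rule allI, rule impI, elim conjE)
    fix W0 t C' assume C1: "C' > 1"
      and ratio: "\<forall>i<n. \<forall>j<n. gfun (y i * f (gd L \<alpha> W0 t) (x i)) / gfun (y j * f (gd L \<alpha> W0 t) (x j)) \<le> C'"
      and orth: "\<forall>k<n. \<forall>i<n. i \<noteq> k \<longrightarrow>
            (vnorm d (x k))\<^sup>2 \<ge> 2 / \<gamma>\<^sup>2 * C' * real n * \<bar>ip d (x i) (x k)\<bar>"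
      and st: "\<alpha> * (2 * H * C' * R\<^sup>2 * Rmx\<^sup>2 * real n) \<le> \<gamma>\<^sup>2"
    have gdS: "gd L \<alpha> W0 (Suc t) = (\<lambda>p. gd L \<alpha> W0 t p - \<alpha> * gradf \<phi> a m d n x y (gd L \<alpha> W0 t) p)"
      unfolding L_def by (simp add: grad_formula[OF phi])
    show "\<forall>k<n. y k * (f (gd L \<alpha> W0 (Suc t)) (x k) - f (gd L \<alpha> W0 t) (x k))
              \<ge> \<alpha> * \<gamma>\<^sup>2 * Rmn\<^sup>2 / (4 * C' * real n) * G (gd L \<alpha> W0 t)"
      unfolding gdS f_def G_def Rmn_def
      using one_step[OF phi gam n m y a xnz alpha, of C' "gd L \<alpha> W0 t"] C1 ratio orth st
      unfolding f_def R_def Rmx_def by auto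
  qed
  define S where "S = (\<lambda>W::nat \<times> nat \<Rightarrow> real. \<Sum>p\<in>{..<m} \<times> {..<d}. (W p)\<^sup>2)"
  define B where "B = \<alpha> * \<gamma>\<^sup>2 * (Rmin n d x)\<^sup>2 / (64 * real n)"
  define E where "E = {W \<in> space M. S W \<le> B\<^sup>2 / (2 * (Rmax n d x)\<^sup>2)}"
  interpret P: prob_space M unfolding M_def using omega by (rule init_prob)
  have netm[measurable]: "(\<lambda>W. net \<phi> a m d W z) \<in> borel_measurable M" for z
    unfolding M_def by (rule net_meas[OF comp_meas phi_meas(1)[OF phi]])
  have stepm[measurable]: "(\<lambda>W. net \<phi> a m d (\<lambda>p. W p - \<alpha> * gradf \<phi> a m d n x y W p) z) \<in> borel_measurable M" for z
    unfolding M_def by (rule step_meas[OF comp_meas phi])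
  note GE = good_event[OF phi gam n m d a xnz alpha omega delta, folded M_def S_def B_def E_def]
  have partA: "\<alpha> \<le> \<gamma>\<^sup>2 / (5 * real n * Rmx\<^sup>2 * R\<^sup>2 * CR * max 1 H)
      \<and> \<omega> \<le> \<alpha> * \<gamma>\<^sup>2 * Rmn / (72 * R * CR * real n * sqrt (real m * real d * ln (4 * real m / \<delta>)))
      \<longrightarrow> measure M {W \<in> space M. \<forall>i<n. \<forall>j<n.
              exp (- (y i * f W (x i))) / exp (- (y j * f W (x j))) \<le> exp 2} \<ge> 1 - \<delta>"
  proof (intro impI, elim conjE)
    assume A1: "\<alpha> \<le> \<gamma>\<^sup>2 / (5 * real n * Rmx\<^sup>2 * R\<^sup>2 * CR * max 1 H)"
      and A2: "\<omega> \<le> \<alpha> * \<gamma>\<^sup>2 * Rmn / (72 * R * CR * real n * sqrt (real m * real d * ln (4 * real m / \<delta>)))"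
    note G = GE[OF A1[unfolded Rmx_def R_def CR_def] A2[unfolded Rmn_def R_def CR_def]]
    have sub: "E \<subseteq> {W \<in> space M. \<forall>i<n. \<forall>j<n. exp (- (y i * f W (x i))) / exp (- (y j * f W (x j))) \<le> exp 2}"
    proof
      fix W assume W: "W \<in> E"
      have sp: "W \<in> space M" using W unfolding E_def by auto
      have "\<forall>i<n. \<forall>j<n. exp (- (y i * f W (x i))) / exp (- (y j * f W (x j))) \<le> exp 2"
      proof (intro allI impI)
      fix i j assume i: "i < n" and j: "j < n"
      have b: "\<bar>f W (x l)\<bar> \<le> 1" if "l < n" for l
        using G(3)[of W l] W that G(5) unfolding E_def f_def S_def by fastforce
      have yi: "\<bar>y i * f W (x i)\<bar> \<le> 1" "\<bar>y j * f W (x j)\<bar> \<le> 1"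
        using b[OF i] b[OF j] y i j by (auto simp: abs_mult)
      have "exp (- (y i * f W (x i))) / exp (- (y j * f W (x j))) = exp (y j * f W (x j) - y i * f W (x i))"
        by (simp add: exp_diff exp_minus field_simps)
      also have "\<dots> \<le> exp 2" using yi by simp
      finally show "exp (- (y i * f W (x i))) / exp (- (y j * f W (x j))) \<le> exp 2" .
      qed
      then show "W \<in> {W \<in> space M. \<forall>i<n. \<forall>j<n. exp (- (y i * f W (x i))) / exp (- (y j * f W (x j))) \<le> exp 2}"
        using sp by simp
    qed
    have meas: "{W \<in> space M. \<forall>i<n. \<forall>j<n. exp (- (y i * f W (x i))) / exp (- (y j * f W (x j))) \<le> exp 2} \<in> sets M"
      unfolding f_def by measurable
    show "measure M {W \<in> space M. \<forall>i<n. \<forall>j<n. exp (- (y i * f W (x i))) / exp (- (y j * f W (x j))) \<le> exp 2} \<ge> 1 - \<delta>"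
      using P.finite_measure_mono[OF sub meas] G(2) unfolding E_def S_def by simp
  qed
  have partC: "(\<forall>k<n. \<forall>i<n. i \<noteq> k \<longrightarrow>
            (vnorm d (x k))\<^sup>2 \<ge> 8 / \<gamma>\<^sup>2 * real n * \<bar>ip d (x i) (x k)\<bar>)
      \<and> \<alpha> \<le> \<gamma>\<^sup>2 / (5 * real n * Rmx\<^sup>2 * R\<^sup>2 * CR * max 1 H)
      \<and> \<omega> \<le> \<alpha> * \<gamma>\<^sup>2 * Rmn / (72 * R * CR * real n * sqrt (real m * real d * ln (4 * real m / \<delta>)))
      \<longrightarrow> measure M {W \<in> space M. \<forall>k<n. y k * f (gd L \<alpha> W 1) (x k) > 0} \<ge> 1 - \<delta>"
  proof (intro impI, elim conjE)
    assume orth: "\<forall>k<n. \<forall>i<n. i \<noteq> k \<longrightarrow> (vnorm d (x k))\<^sup>2 \<ge> 8 / \<gamma>\<^sup>2 * real n * \<bar>ip d (x i) (x k)\<bar>"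
      and A1: "\<alpha> \<le> \<gamma>\<^sup>2 / (5 * real n * Rmx\<^sup>2 * R\<^sup>2 * CR * max 1 H)"
      and A2: "\<omega> \<le> \<alpha> * \<gamma>\<^sup>2 * Rmn / (72 * R * CR * real n * sqrt (real m * real d * ln (4 * real m / \<delta>)))"
    note G = GE[OF A1[unfolded Rmx_def R_def CR_def] A2[unfolded Rmn_def R_def CR_def]]
    have gd1: "gd L \<alpha> W 1 = (\<lambda>p. W p - \<alpha> * gradf \<phi> a m d n x y W p)" for W
      unfolding L_def by (simp add: grad_formula[OF phi])
    have Rn: "0 < Rmn" "Rmn \<le> Rmx" using RF unfolding Rmn_def Rmx_def by auto
    have CR: "10 \<le> CR" unfolding CR_def using gam by simp
    have nr: "1 \<le> real n" using n by simp
    have st: "\<alpha> * (2 * H * 4 * (Rmax n d x / Rmin n d x)\<^sup>2 * (Rmax n d x)\<^sup>2 * real n) \<le> \<gamma>\<^sup>2"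
    proof -
      define Q where "Q = Rmx\<^sup>2 * R\<^sup>2 * real n"
      have Rp: "0 < R" "0 < Rmx" using Rn unfolding R_def Rmx_def Rmn_def by auto
      have Qp: "0 < Q" unfolding Q_def using Rp nr by simp
      have "8 * H \<le> 5 * CR * max 1 H"
      proof -
        have "5 * 10 * max 1 H \<le> 5 * CR * max 1 H" using CR by (intro mult_right_mono) auto
        moreover have "H \<le> max 1 H" by simp
        ultimately show ?thesis by linarith
      qed
      then have Dle: "8 * H * Q \<le> 5 * CR * max 1 H * Q" using Qp by (intro mult_right_mono) auto
      have Dp: "0 < 5 * CR * max 1 H * Q" using CR Qp by (intro mult_pos_pos) auto
      have "\<alpha> * (5 * CR * max 1 H * Q) \<le> \<gamma>\<^sup>2"
        using A1 Dp unfolding Q_def by (simp add: le_divide_eq mult_ac)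
      moreover have "\<alpha> * (8 * H * Q) \<le> \<alpha> * (5 * CR * max 1 H * Q)" using Dle alpha by (intro mult_left_mono) auto
      ultimately show ?thesis unfolding Q_def R_def Rmx_def by (simp add: mult_ac)
    qed
    have sub: "E \<subseteq> {W \<in> space M. \<forall>k<n. y k * f (gd L \<alpha> W 1) (x k) > 0}"
    proof
      fix W assume W: "W \<in> E"
      have sp: "W \<in> space M" using W unfolding E_def by auto
      have "\<forall>k<n. y k * f (gd L \<alpha> W 1) (x k) > 0"
      proof (intro allI impI)
      fix k assume k: "k < n"
      have b: "\<bar>f W (x l)\<bar> < B" if "l < n" for l
        using G(3)[of W l] W that unfolding E_def f_def S_def by fastforce
      have z1: "\<bar>y l * f W (x l)\<bar> < B" if "l < n" for l using b[OF that] y that by (auto simp: abs_mult)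
      have q: "1 / 4 \<le> gfun (y l * f W (x l))" if "l < n" for l
        using z1[OF that] G(5) by (intro gfun_quarter) auto
      have ratio: "\<forall>i<n. \<forall>j<n. gfun (y i * net \<phi> a m d W (x i)) / gfun (y j * net \<phi> a m d W (x j)) \<le> 4"
      proof (intro allI impI)
        fix i j assume i: "i < n" and j: "j < n"
        have "gfun (y i * f W (x i)) \<le> 1" using gfun_bounds(2) less_imp_le by blast
        then show "gfun (y i * net \<phi> a m d W (x i)) / gfun (y j * net \<phi> a m d W (x j)) \<le> 4"
          using q[OF j] unfolding f_def by (simp add: divide_le_eq)
      qed
      have orth4: "\<forall>k<n. \<forall>i<n. i \<noteq> k \<longrightarrow> (vnorm d (x k))\<^sup>2 \<ge> 2 / \<gamma>\<^sup>2 * 4 * real n * \<bar>ip d (x i) (x k)\<bar>"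
        using orth by simp
      have inc: "y k * (f (gd L \<alpha> W 1) (x k) - f W (x k)) \<ge> \<alpha> * \<gamma>\<^sup>2 * Rmn\<^sup>2 / (4 * 4 * real n) * G W"
        using one_step[OF phi gam n m y a xnz alpha _ ratio orth4 st k] unfolding gd1 f_def G_def Rmn_def by simp
      have Gq: "1 / 4 \<le> G W"
      proof -
        have "(\<Sum>i<n. 1 / 4) \<le> (\<Sum>i<n. gfun (y i * f W (x i)))" using q by (intro sum_mono) auto
        then show ?thesis unfolding G_def emp_G_def f_def using nr by (simp add: field_simps)
      qed
      have c: "\<alpha> * \<gamma>\<^sup>2 * Rmn\<^sup>2 / (4 * 4 * real n) * (1 / 4) \<le> \<alpha> * \<gamma>\<^sup>2 * Rmn\<^sup>2 / (4 * 4 * real n) * G W"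
        using Gq alpha nr by (intro mult_left_mono) auto
      have Bq: "\<alpha> * \<gamma>\<^sup>2 * Rmn\<^sup>2 / (4 * 4 * real n) * (1 / 4) = B" unfolding B_def Rmn_def by simp
      have "y k * f W (x k) > - B" using z1[OF k] by auto
      then show "y k * f (gd L \<alpha> W 1) (x k) > 0" using inc c Bq by (simp add: right_diff_distrib)
      qed
      then show "W \<in> {W \<in> space M. \<forall>k<n. y k * f (gd L \<alpha> W 1) (x k) > 0}" using sp by simp
    qed
    have meas: "{W \<in> space M. \<forall>k<n. y k * f (gd L \<alpha> W 1) (x k) > 0} \<in> sets M"
      unfolding gd1 f_def by measurable
    show "measure M {W \<in> space M. \<forall>k<n. y k * f (gd L \<alpha> W 1) (x k) > 0} \<ge> 1 - \<delta>"
      using P.finite_measure_mono[OF sub meas] G(2) unfolding E_def S_def by simp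
  qed
  show ?thesis using partA partB partC by blast
qed

end
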